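(* Let $E$ be an $\mathbb{R}$-group, $X$ a locally compact (Hausdorff) space not reduced to one point, and $\mathcal{H}=(H_\varepsilon)_{\varepsilon\in E}$ a continuous absorptive action of $E$ on $X$ with center $\omega$. Then $\omega$ has a countable neighbourhood base consisting of compact elementary sets, and also a countable neighbourhood base consisting of open elementary sets.
   Context: An $\mathbb{R}$-group is an abelian group $E$ (operation written multiplicatively) whose underlying set is a subset of $\mathbb{R}$ containing all positive integers, such that: (RG1) with the natural order of $\mathbb{R}$, $E$ is a totally ordered group; (RG2) with the topology induced from $\mathbb{R}$, $E$ is a locally compact group; (RG3) there is a nonconstant continuous homomorphism $h:E\to\mathbb{R}_+^*$ such that for every $\alpha\in E$ the set $\{\varepsilon\in E:\varepsilon\ge\alpha\}$ is integrable for $h\cdot m$, $m$ a Haar measure on $E$. $e$ is the identity of $E$, $\varepsilon^{-1}$ the group inverse; inequalities refer to the order of $\mathbb{R}$. An action of $E$ on $X$ is a family $(H_\varepsilon)_{\varepsilon\in E}$ of bijections of $X$ with $H_\varepsilon\circ H_{\varepsilon'}=H_{\varepsilon\varepsilon'}$, $H_e=\mathrm{id}_X$; continuous if $(\varepsilon,x)\mapsto H_\varepsilon(x)$ is continuous on $E\times X$; absorptive if some $\omega\in X$ satisfies (ABS): for every neighbourhood $V$ of $\omega$ and every $x\in X$ there are a neighbourhood $U$ of $x$ and $\alpha\in E$ with $H_{\varepsilon^{-1}}(U)\subset V$ for all $\varepsilon\le\alpha$; this $\omega$ is unique and called the center. A set $T\subset X$ is balanced if $H_{\varepsilon^{-1}}(T)\subset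 T$ for all $\varepsilon\le e$; it is elementary if it is a balanced relatively compact neighbourhood of $\omega$. *)

theory Defs
  imports "HOL-Analysis.Analysis"
begin

definition abelian_group_on :: "real set \<Rightarrow> (real \<Rightarrow> real \<Rightarrow> real) \<Rightarrow> real \<Rightarrow> (real \<Rightarrow> real) \<Rightarrow> bool" where
  "abelian_group_on E mul e ginv \<longleftrightarrow>
     (\<forall>a\<in>E. \<forall>b\<in>E. mul a b \<in> E) \<and>
     (\<forall>a\<in>E. \<forall>b\<in>E. \<forall>c\<in>E. mul (mul a b) c = mul a (mul b c)) \<and>
     (\<forall>a\<in>E. \<forall>b\<in>E. mul a b = mul b a) \<and>
     e \<in> E \<and> (\<forall>a\<in>E. mul e a = a) \<and>
     (\<forall>a\<in>E. ginv a \<in> E \<and> mul (ginv a) a = e)"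

text \<open>Haar measure on E (subspace topology of the reals): a nonzero left-invariant Borel
  measure, finite on compact sets and positive on nonempty open sets (for second-countable
  locally compact groups such as subgroups of the reals this is exactly a Haar measure).\<close>
definition haar_measure_on :: "real set \<Rightarrow> (real \<Rightarrow> real \<Rightarrow> real) \<Rightarrow> real measure \<Rightarrow> bool" where
  "haar_measure_on E mul m \<longleftrightarrow>
     space m = E \<and> sets m = sets (restrict_space borel E) \<and>
     (\<forall>a\<in>E. \<forall>A\<in>sets m. emeasure m ((\<lambda>x. mul a x) ` A) = emeasure m A) \<and>
     (\<forall>K. compact K \<and> K \<subseteq> E \<longrightarrow> emeasure m K < \<infinity>) \<and>
     (\<forall>U. openin (top_of_set E) U \<and> U \<noteq> {} \<longrightarrow> emeasure m U > 0)"

definition R_group :: "real set \<Rightarrow> (real \<Rightarrow> real \<Rightarrow> real) \<Rightarrow> real \<Rightarrow> (real \<Rightarrow> real) \<Rightarrow> bool" where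
  "R_group E mul e ginv \<longleftrightarrow>
     abelian_group_on E mul e ginv \<and>
     (\<forall>n::nat. n \<ge> 1 \<longrightarrow> real n \<in> E) \<and>
     \<comment> \<open>(RG1) totally ordered group for the natural order of the reals\<close>
     (\<forall>a\<in>E. \<forall>b\<in>E. \<forall>c\<in>E. a \<le> b \<longrightarrow> mul a c \<le> mul b c) \<and>
     \<comment> \<open>(RG2) locally compact topological group for the induced topology\<close>
     continuous_on (E \<times> E) (\<lambda>(a, b). mul a b) \<and> continuous_on E ginv \<and>
     locally compact E \<and>
     \<comment> \<open>(RG3)\<close>
     (\<exists>h m. haar_measure_on E mul m \<and>
        (\<forall>a\<in>E. h a > 0) \<and> (\<forall>a\<in>E. \<forall>b\<in>E. h (mul a b) = h a * h b) \<and>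
        continuous_on E h \<and> (\<exists>a\<in>E. \<exists>b\<in>E. h a \<noteq> h b) \<and>
        (\<forall>\<alpha>\<in>E. emeasure (density m (\<lambda>x. ennreal (h x))) {\<epsilon>\<in>E. \<epsilon> \<ge> \<alpha>} < \<infinity>))"

definition nbhd :: "'a topology \<Rightarrow> 'a \<Rightarrow> 'a set \<Rightarrow> bool" where
  "nbhd X x U \<longleftrightarrow> U \<subseteq> topspace X \<and> (\<exists>W. openin X W \<and> x \<in> W \<and> W \<subseteq> U)"

definition group_action :: "real set \<Rightarrow> (real \<Rightarrow> real \<Rightarrow> real) \<Rightarrow> real \<Rightarrow> 'a topology \<Rightarrow> (real \<Rightarrow> 'a \<Rightarrow> 'a) \<Rightarrow> bool" where
  "group_action E mul e X H \<longleftrightarrow>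
     (\<forall>\<epsilon>\<in>E. bij_betw (H \<epsilon>) (topspace X) (topspace X)) \<and>
     (\<forall>\<epsilon>\<in>E. \<forall>\<epsilon>'\<in>E. \<forall>x\<in>topspace X. H \<epsilon> (H \<epsilon>' x) = H (mul \<epsilon> \<epsilon>') x) \<and>
     (\<forall>x\<in>topspace X. H e x = x)"

definition continuous_action :: "real set \<Rightarrow> 'a topology \<Rightarrow> (real \<Rightarrow> 'a \<Rightarrow> 'a) \<Rightarrow> bool" where
  "continuous_action E X H \<longleftrightarrow>
     continuous_map (prod_topology (top_of_set E) X) X (\<lambda>(\<epsilon>, x). H \<epsilon> x)"

definition absorptive_center :: "real set \<Rightarrow> (real \<Rightarrow> real) \<Rightarrow> 'a topology \<Rightarrow> (real \<Rightarrow> 'a \<Rightarrow> 'a) \<Rightarrow> 'a \<Rightarrow> bool" where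
  "absorptive_center E ginv X H \<omega> \<longleftrightarrow> \<omega> \<in> topspace X \<and>
     (\<forall>V. nbhd X \<omega> V \<longrightarrow> (\<forall>x\<in>topspace X. \<exists>U \<alpha>. nbhd X x U \<and> \<alpha> \<in> E \<and>
         (\<forall>\<epsilon>\<in>E. \<epsilon> \<le> \<alpha> \<longrightarrow> H (ginv \<epsilon>) ` U \<subseteq> V)))"

definition balanced :: "real set \<Rightarrow> real \<Rightarrow> (real \<Rightarrow> real) \<Rightarrow> 'a topology \<Rightarrow> (real \<Rightarrow> 'a \<Rightarrow> 'a) \<Rightarrow> 'a set \<Rightarrow> bool" where
  "balanced E e ginv X H T \<longleftrightarrow> T \<subseteq> topspace X \<and>
     (\<forall>\<epsilon>\<in>E. \<epsilon> \<le> e \<longrightarrow> H (ginv \<epsilon>) ` T \<subseteq> T)"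

definition elementary :: "real set \<Rightarrow> real \<Rightarrow> (real \<Rightarrow> real) \<Rightarrow> 'a topology \<Rightarrow> (real \<Rightarrow> 'a \<Rightarrow> 'a) \<Rightarrow> 'a \<Rightarrow> 'a set \<Rightarrow> bool" where
  "elementary E e ginv X H \<omega> T \<longleftrightarrow> balanced E e ginv X H T \<and>
     compactin X (X closure_of T) \<and> nbhd X \<omega> T"

end

theory Submission
  imports Defs
begin


lemma grp_facts:
  assumes "abelian_group_on E mul e ginv"
  shows "\<And>a b. a\<in>E \<Longrightarrow> b\<in>E \<Longrightarrow> mul a b \<in> E"
    and "\<And>a b c. a\<in>E \<Longrightarrow> b\<in>E \<Longrightarrow> c\<in>E \<Longrightarrow> mul (mul a b) c = mul a (mul b c)"
    and "\<And>a b. a\<in>E \<Longrightarrow> b\<in>E \<Longrightarrow> mul a b = mul b a"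
    and "e \<in> E" and "\<And>a. a\<in>E \<Longrightarrow> mul e a = a" and "\<And>a. a\<in>E \<Longrightarrow> mul a e = a"
    and "\<And>a. a\<in>E \<Longrightarrow> ginv a \<in> E" and "\<And>a. a\<in>E \<Longrightarrow> mul (ginv a) a = e"
    and "\<And>a. a\<in>E \<Longrightarrow> mul a (ginv a) = e"
  using assms unfolding abelian_group_on_def by auto

lemma grp_inv_unique:
  assumes G: "abelian_group_on E mul e ginv" and "x\<in>E" "y\<in>E" "mul x y = e"
  shows "x = ginv y"
proof -
  note g = grp_facts[OF G]
  have "x = mul x (mul y (ginv y))" using g(6,9) assms by metis
  also have "\<dots> = mul (mul x y) (ginv y)" using g(2,7) assms by metis
  also have "\<dots> = ginv y" using g(5,7) assms by metis
  finally show ?thesis .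
qed

lemma grp_ginv_ginv:
  assumes G: "abelian_group_on E mul e ginv" and "a\<in>E" shows "ginv (ginv a) = a"
  using grp_inv_unique[OF G, of a "ginv a"] grp_facts[OF G] assms by metis

lemma grp_ginv_mul:
  assumes G: "abelian_group_on E mul e ginv" and a: "a\<in>E" and b: "b\<in>E"
  shows "ginv (mul a b) = mul (ginv a) (ginv b)"
proof -
  note g = grp_facts[OF G]
  have "mul (mul (ginv a) (ginv b)) (mul a b) = mul (mul (ginv a) a) (mul (ginv b) b)"
    using g a b by (metis (no_types, lifting))
  also have "\<dots> = e" using g(4,5,8) a b by metis
  finally show ?thesis using grp_inv_unique[OF G] g a b by metis
qed



theorem corollary2p4:
  fixes E :: "real set" and mul :: "real \<Rightarrow> real \<Rightarrow> real" and e :: real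
    and ginv :: "real \<Rightarrow> real" and X :: "'a topology" and H :: "real \<Rightarrow> 'a \<Rightarrow> 'a" and \<omega> :: 'a
  assumes "R_group E mul e ginv"
    and "Hausdorff_space X" and "locally_compact_space X"
    and "\<exists>x\<in>topspace X. \<exists>y\<in>topspace X. x \<noteq> y"
    and "group_action E mul e X H" and "continuous_action E X H"
    and "absorptive_center E ginv X H \<omega>"
  shows "(\<exists>\<B>. countable \<B> \<and>
            (\<forall>T\<in>\<B>. elementary E e ginv X H \<omega> T \<and> compactin X T) \<and>
            (\<forall>V. nbhd X \<omega> V \<longrightarrow> (\<exists>T\<in>\<B>. T \<subseteq> V)))
       \<and> (\<exists>\<B>. countable \<B> \<and>
            (\<forall>T\<in>\<B>. elementary E e ginv X H \<omega> T \<and> openin X T) \<and>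
            (\<forall>V. nbhd X \<omega> V \<longrightarrow> (\<exists>T\<in>\<B>. T \<subseteq> V)))"
proof -
  have G: "abelian_group_on E mul e ginv" and nat: "\<And>n::nat. n \<ge> 1 \<Longrightarrow> real n \<in> E"
    and ord: "\<And>a b c. a\<in>E \<Longrightarrow> b\<in>E \<Longrightarrow> c\<in>E \<Longrightarrow> a \<le> b \<Longrightarrow> mul a c \<le> mul b c"
    using assms(1) unfolding R_group_def by auto
  note g = grp_facts[OF G]
  note gg = grp_ginv_ginv[OF G]
  note gm = grp_ginv_mul[OF G]
  have ord': "\<And>a b c. a\<in>E \<Longrightarrow> b\<in>E \<Longrightarrow> c\<in>E \<Longrightarrow> a \<le> b \<Longrightarrow> mul c a \<le> mul c b"
  proof -
    fix a b c assume h: "a\<in>E" "b\<in>E" "c\<in>E" "a \<le> b"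
    show "mul c a \<le> mul c b" using ord[OF h] g(3)[OF h(1,3)] g(3)[OF h(2,3)] by simp
  qed
  have inv_anti: "ginv b \<le> ginv a" if "a\<in>E" "b\<in>E" "a \<le> b" for a b
  proof -
    have ia: "ginv a \<in> E" and ib: "ginv b \<in> E" using g(7) that by auto
    have c: "mul (ginv a) (ginv b) \<in> E" using g(1)[OF ia ib] .
    have "mul a (mul (ginv a) (ginv b)) = mul (mul a (ginv a)) (ginv b)"
      using g(2)[OF that(1) ia ib] by (rule sym)
    also have "\<dots> = ginv b" using g(9)[OF that(1)] g(5)[OF ib] by (rule trans[OF arg_cong[where f="\<lambda>z. mul z (ginv b)"]])
    finally have 1: "mul a (mul (ginv a) (ginv b)) = ginv b" .
    have "mul b (mul (ginv a) (ginv b)) = mul b (mul (ginv b) (ginv a))"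
      using g(3)[OF ia ib] by (rule arg_cong)
    also have "\<dots> = mul (mul b (ginv b)) (ginv a)"
      using g(2)[OF that(2) ib ia] by (rule sym)
    also have "\<dots> = ginv a" using g(9)[OF that(2)] g(5)[OF ia] by (rule trans[OF arg_cong[where f="\<lambda>z. mul z (ginv a)"]])
    finally have 2: "mul b (mul (ginv a) (ginv b)) = ginv a" .
    show ?thesis using ord[OF that(1,2) c that(3)] unfolding 1 2 .
  qed
  let ?T = "topspace X"
  have bij: "\<And>a. a\<in>E \<Longrightarrow> bij_betw (H a) ?T ?T"
    and act: "\<And>a b x. a\<in>E \<Longrightarrow> b\<in>E \<Longrightarrow> x\<in>?T \<Longrightarrow> H a (H b x) = H (mul a b) x"
    and hid: "\<And>x. x\<in>?T \<Longrightarrow> H e x = x"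
    using assms(5) unfolding group_action_def by auto
  have Hin: "\<And>a x. a\<in>E \<Longrightarrow> x\<in>?T \<Longrightarrow> H a x \<in> ?T"
    using bij bij_betwE by blast
  have Hcomm: "\<And>a b x. a\<in>E \<Longrightarrow> b\<in>E \<Longrightarrow> x\<in>?T \<Longrightarrow> H a (H b x) = H b (H a x)"
    using act g(3) by (metis (no_types))
  have cont: "continuous_map X X (H a)" if a: "a\<in>E" for a
  proof -
    have "continuous_map X (prod_topology (top_of_set E) X) (\<lambda>x. (a, x))"
      by (intro continuous_map_pairedI) (auto simp: a)
    from continuous_map_compose[OF this assms(6)[unfolded continuous_action_def]]
    show ?thesis by (simp add: o_def)
  qed
  have homeo: "homeomorphic_map X X (H a)" if a: "a\<in>E" for a
  proof -
    have "homeomorphic_maps X X (H a) (H (ginv a))"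
      unfolding homeomorphic_maps_def using cont[OF a] cont[OF g(7)[OF a]] a g(7,8,9) act g(7)[OF a] hid Hin by auto
    thus ?thesis by (rule homeomorphic_maps_imp_map)
  qed
  have openimg: "openin X (H a ` W)" if "a\<in>E" "openin X W" for a W
    using homeomorphic_map_openness[OF homeo[OF that(1)] openin_subset[OF that(2)]] that(2) by simp
  have \<omega>T: "\<omega> \<in> ?T" using assms(7) unfolding absorptive_center_def by auto
  have ABS: "\<And>V x. nbhd X \<omega> V \<Longrightarrow> x\<in>?T \<Longrightarrow> \<exists>U \<alpha>. nbhd X x U \<and> \<alpha> \<in> E \<and>
         (\<forall>\<epsilon>\<in>E. \<epsilon> \<le> \<alpha> \<longrightarrow> H (ginv \<epsilon>) ` U \<subseteq> V)"
    using assms(7) unfolding absorptive_center_def by auto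
  have fixw: "H a \<omega> = \<omega>" if a: "a\<in>E" for a
  proof (rule ccontr)
    assume ne: "H a \<omega> \<noteq> \<omega>"
    obtain V V' where VV: "openin X V" "openin X V'" "\<omega> \<in> V" "H a \<omega> \<in> V'" "disjnt V V'"
      using assms(2) ne \<omega>T Hin[OF a \<omega>T] unfolding Hausdorff_space_def by metis
    define Ob where "Ob = {x\<in>?T. H a x \<in> V'}"
    have "openin X Ob" unfolding Ob_def using openin_continuous_map_preimage[OF cont[OF a] VV(2)] by simp
    hence "openin X (V \<inter> Ob)" using VV(1) by blast
    moreover have "\<omega> \<in> V \<inter> Ob" using VV \<omega>T unfolding Ob_def by auto
    ultimately have "nbhd X \<omega> (V \<inter> Ob)" unfolding nbhd_def using openin_subset by blast
    then obtain U \<alpha> where U: "nbhd X \<omega> U" "\<alpha>\<in>E" "\<forall>\<epsilon>\<in>E. \<epsilon> \<le> \<alpha> \<longrightarrow> H (ginv \<epsilon>) ` U \<subseteq> V \<inter> Ob"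
      using ABS \<omega>T by blast
    have \<omega>U: "\<omega> \<in> U" using U(1) unfolding nbhd_def by blast
    define \<epsilon> where "\<epsilon> = min \<alpha> (mul \<alpha> a)"
    have \<epsilon>E: "\<epsilon> \<in> E" using U(2) g(1)[OF U(2) a] unfolding \<epsilon>_def min_def by auto
    have "\<epsilon> \<le> \<alpha>" unfolding \<epsilon>_def by simp
    hence z: "H (ginv \<epsilon>) \<omega> \<in> V \<inter> Ob" using U \<epsilon>E \<omega>U by blast
    have "mul \<epsilon> (ginv a) \<le> mul (mul \<alpha> a) (ginv a)"
      using ord[OF \<epsilon>E g(1)[OF U(2) a] g(7)[OF a]] unfolding \<epsilon>_def by simp
    also have "\<dots> = \<alpha>" using g(2)[OF U(2) a g(7)[OF a]] g(9)[OF a] g(6)[OF U(2)] by simp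
    finally have le: "mul \<epsilon> (ginv a) \<le> \<alpha>" .
    have eE2: "mul \<epsilon> (ginv a) \<in> E" using g(1)[OF \<epsilon>E g(7)[OF a]] .
    have "H a (H (ginv \<epsilon>) \<omega>) = H (mul a (ginv \<epsilon>)) \<omega>"
      using act[OF a g(7)[OF \<epsilon>E] \<omega>T] .
    also have "\<dots> = H (ginv (mul \<epsilon> (ginv a))) \<omega>"
      using gm[OF \<epsilon>E g(7)[OF a]] gg[OF a] g(3)[OF a g(7)[OF \<epsilon>E]] by simp
    also have "\<dots> \<in> V" using U(3) eE2 le \<omega>U by blast
    finally show False using z VV(5) unfolding Ob_def disjnt_def by blast
  qed
  have Himg: "H a ` S \<subseteq> ?T" if "a\<in>E" "S \<subseteq> ?T" for a S
    using Hin that by blast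
  have bal_img: "balanced E e ginv X H (H c ` S)" if c: "c\<in>E" and S: "balanced E e ginv X H S" for c S
  proof -
    have ST: "S \<subseteq> ?T" using S unfolding balanced_def by blast
    show ?thesis unfolding balanced_def
    proof (intro conjI ballI impI)
      show "H c ` S \<subseteq> ?T" using Himg[OF c ST] .
      fix \<delta> assume d: "\<delta>\<in>E" "\<delta> \<le> e"
      have "H (ginv \<delta>) ` (H c ` S) = H c ` (H (ginv \<delta>) ` S)"
        using Hcomm[OF g(7)[OF d(1)] c] ST by (auto simp: image_iff) (metis subsetD)+
      also have "\<dots> \<subseteq> H c ` S" using S d unfolding balanced_def by blast
      finally show "H (ginv \<delta>) ` (H c ` S) \<subseteq> H c ` S" .
    qed
  qed
  obtain U0 K0 where UK: "openin X U0" "compactin X K0" "\<omega>\<in>U0" "U0\<subseteq>K0"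
    using assms(3) \<omega>T unfolding locally_compact_space_def by blast
  have K0c: "closedin X K0" using compactin_imp_closedin[OF assms(2) UK(2)] .
  have K0T: "K0 \<subseteq> ?T" using compactin_subset_topspace[OF UK(2)] .
  have "nbhd X \<omega> K0" unfolding nbhd_def using UK K0T by blast
  then obtain U1 \<alpha> where U1: "nbhd X \<omega> U1" "\<alpha>\<in>E" "\<forall>\<epsilon>\<in>E. \<epsilon> \<le> \<alpha> \<longrightarrow> H (ginv \<epsilon>) ` U1 \<subseteq> K0"
    using ABS \<omega>T by blast
  obtain W1 where W1: "openin X W1" "\<omega>\<in>W1" "W1 \<subseteq> U1" using U1(1) unfolding nbhd_def by blast
  have W1T: "W1 \<subseteq> ?T" using openin_subset[OF W1(1)] .
  define T where "T = (\<Union>\<epsilon>\<in>{\<epsilon>\<in>E. \<epsilon> \<le> \<alpha>}. H (ginv \<epsilon>) ` W1)"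
  have TK0: "T \<subseteq> K0" unfolding T_def using U1(3) W1(3) by blast
  have TT: "T \<subseteq> ?T" using TK0 K0T by blast
  have Topen: "openin X T" unfolding T_def
    by (rule openin_Union) (auto intro: openimg[OF g(7) W1(1)])
  have \<omega>inT: "\<omega> \<in> T"
  proof -
    have "H (ginv \<alpha>) \<omega> = \<omega>" using fixw[OF g(7)[OF U1(2)]] .
    hence "\<omega> \<in> H (ginv \<alpha>) ` W1" using W1(2) by (metis image_eqI)
    thus ?thesis unfolding T_def using U1(2) by blast
  qed
  have Tbal: "balanced E e ginv X H T" unfolding balanced_def
  proof (intro conjI ballI impI)
    show "T \<subseteq> ?T" by (rule TT)
    fix \<delta> assume d: "\<delta>\<in>E" "\<delta> \<le> e"
    show "H (ginv \<delta>) ` T \<subseteq> T"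
    proof
      fix y assume "y \<in> H (ginv \<delta>) ` T"
      then obtain \<epsilon> w where ew: "\<epsilon>\<in>E" "\<epsilon> \<le> \<alpha>" "w \<in> W1" "y = H (ginv \<delta>) (H (ginv \<epsilon>) w)"
        unfolding T_def by blast
      have wT: "w \<in> ?T" using ew(3) W1T by blast
      have "y = H (mul (ginv \<delta>) (ginv \<epsilon>)) w" using act[OF g(7)[OF d(1)] g(7)[OF ew(1)] wT] ew(4) by simp
      also have "mul (ginv \<delta>) (ginv \<epsilon>) = ginv (mul \<delta> \<epsilon>)" using gm[OF d(1) ew(1)] by simp
      finally have y: "y = H (ginv (mul \<delta> \<epsilon>)) w" .
      have "mul \<delta> \<epsilon> \<le> mul e \<epsilon>" using ord[OF d(1) g(4) ew(1) d(2)] .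
      also have "\<dots> = \<epsilon>" using g(5)[OF ew(1)] .
      finally have "mul \<delta> \<epsilon> \<le> \<alpha>" using ew(2) by simp
      moreover have "mul \<delta> \<epsilon> \<in> E" using g(1)[OF d(1) ew(1)] .
      ultimately show "y \<in> T" unfolding T_def using y ew(3) by blast
    qed
  qed
  define K where "K = X closure_of T"
  have KK0: "K \<subseteq> K0" unfolding K_def using closure_of_minimal[OF TK0 K0c] .
  have Kc: "compactin X K" using closed_compactin[OF UK(2) KK0] unfolding K_def by simp
  have TK: "T \<subseteq> K" unfolding K_def using closure_of_subset[OF TT] .
  have KT: "K \<subseteq> ?T" using KK0 K0T by blast
  have Kbal: "balanced E e ginv X H K" unfolding balanced_def
  proof (intro conjI ballI impI)
    show "K \<subseteq> ?T" by (rule KT)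
    fix \<delta> assume d: "\<delta>\<in>E" "\<delta> \<le> e"
    have "H (ginv \<delta>) ` K \<subseteq> X closure_of (H (ginv \<delta>) ` T)"
      unfolding K_def by (rule continuous_map_image_closure_subset[OF cont[OF g(7)[OF d(1)]]])
    also have "\<dots> \<subseteq> K" unfolding K_def
      using Tbal d unfolding balanced_def by (intro closure_of_mono) blast
    finally show "H (ginv \<delta>) ` K \<subseteq> K" .
  qed
  have fincov: "\<exists>\<beta>\<in>E. \<forall>\<epsilon>\<in>E. \<epsilon> \<le> \<beta> \<longrightarrow> H (ginv \<epsilon>) ` K \<subseteq> V" if V: "nbhd X \<omega> V" for V
  proof -
    define \<U> where "\<U> = {W. openin X W \<and> (\<exists>\<beta>\<in>E. \<forall>\<epsilon>\<in>E. \<epsilon> \<le> \<beta> \<longrightarrow> H (ginv \<epsilon>) ` W \<subseteq> V)}"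
    have cov: "K \<subseteq> \<Union>\<U>"
    proof
      fix x assume "x \<in> K"
      hence xT: "x \<in> ?T" using KT by blast
      obtain U \<beta> where U: "nbhd X x U" "\<beta>\<in>E" "\<forall>\<epsilon>\<in>E. \<epsilon> \<le> \<beta> \<longrightarrow> H (ginv \<epsilon>) ` U \<subseteq> V"
        using ABS[OF V xT] by blast
      obtain W where W: "openin X W" "x\<in>W" "W \<subseteq> U" using U(1) unfolding nbhd_def by blast
      have "W \<in> \<U>" unfolding \<U>_def using W U(2,3) by blast
      thus "x \<in> \<Union>\<U>" using W(2) by blast
    qed
    have "\<exists>F. finite F \<and> F \<subseteq> \<U> \<and> K \<subseteq> \<Union>F"
      by (rule compactinD[OF Kc _ cov]) (simp add: \<U>_def)
    then obtain F where F: "finite F" "F \<subseteq> \<U>" "K \<subseteq> \<Union>F" by blast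
    have "F \<subseteq> \<U> \<Longrightarrow> \<exists>\<beta>\<in>E. \<forall>\<epsilon>\<in>E. \<epsilon> \<le> \<beta> \<longrightarrow> H (ginv \<epsilon>) ` (\<Union>F) \<subseteq> V"
      using F(1)
    proof (induction F rule: finite_induct)
      case empty
      show ?case using g(4) by (intro bexI[of _ e]) auto
    next
      case (insert W F)
      have "W \<in> \<U>" using insert.prems by simp
      then obtain \<beta>1 where b1: "\<beta>1\<in>E" "\<forall>\<epsilon>\<in>E. \<epsilon> \<le> \<beta>1 \<longrightarrow> H (ginv \<epsilon>) ` W \<subseteq> V"
        unfolding \<U>_def by (auto elim!: bexE)
      have "F \<subseteq> \<U>" using insert.prems by simp
      from insert.IH[OF this] obtain \<beta>2 where b2: "\<beta>2\<in>E" "\<forall>\<epsilon>\<in>E. \<epsilon> \<le> \<beta>2 \<longrightarrow> H (ginv \<epsilon>) ` (\<Union>F) \<subseteq> V"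
        by (elim bexE)
      have "min \<beta>1 \<beta>2 \<in> E" using b1(1) b2(1) by (simp add: min_def)
      moreover have "\<forall>\<epsilon>\<in>E. \<epsilon> \<le> min \<beta>1 \<beta>2 \<longrightarrow> H (ginv \<epsilon>) ` (\<Union>(insert W F)) \<subseteq> V"
      proof (intro ballI impI)
        fix \<epsilon> assume "\<epsilon>\<in>E" "\<epsilon> \<le> min \<beta>1 \<beta>2"
        hence "\<epsilon> \<le> \<beta>1" "\<epsilon> \<le> \<beta>2" by auto
        hence "H (ginv \<epsilon>) ` W \<subseteq> V" "H (ginv \<epsilon>) ` (\<Union>F) \<subseteq> V"
          using b1(2)[rule_format, OF \<open>\<epsilon>\<in>E\<close>] b2(2)[rule_format, OF \<open>\<epsilon>\<in>E\<close>] by auto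
        thus "H (ginv \<epsilon>) ` (\<Union>(insert W F)) \<subseteq> V" by (simp add: image_Un)
      qed
      ultimately show ?case by blast
    qed
    from this[OF F(2)] obtain \<beta> where b: "\<beta>\<in>E" "\<forall>\<epsilon>\<in>E. \<epsilon> \<le> \<beta> \<longrightarrow> H (ginv \<epsilon>) ` (\<Union>F) \<subseteq> V" by (elim bexE)
    show ?thesis
    proof (intro bexI[OF _ b(1)] ballI impI)
      fix \<epsilon> assume eb: "\<epsilon>\<in>E" "\<epsilon> \<le> \<beta>"
      have "H (ginv \<epsilon>) ` (\<Union>F) \<subseteq> V" using b(2)[rule_format, OF eb] .
      with image_mono[OF F(3), of "H (ginv \<epsilon>)"] show "H (ginv \<epsilon>) ` K \<subseteq> V" by (rule order_trans)
    qed
  qed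
  have choose: "\<exists>n::nat. n \<ge> 1 \<and> H (real n) ` K \<subseteq> V" if V: "nbhd X \<omega> V" for V
  proof -
    obtain \<beta> where b: "\<beta>\<in>E" "\<forall>\<epsilon>\<in>E. \<epsilon> \<le> \<beta> \<longrightarrow> H (ginv \<epsilon>) ` K \<subseteq> V" using fincov[OF V] by blast
    define n where "n = nat \<lceil>max 1 (ginv \<beta>)\<rceil>"
    have n1: "n \<ge> 1" unfolding n_def by linarith
    have nb: "ginv \<beta> \<le> real n" unfolding n_def by linarith
    have nE: "real n \<in> E" using nat[OF n1] .
    have "ginv (real n) \<le> ginv (ginv \<beta>)" using inv_anti[OF g(7)[OF b(1)] nE nb] .
    hence le: "ginv (real n) \<le> \<beta>" using gg[OF b(1)] by simp
    have "H (ginv (ginv (real n))) ` K \<subseteq> V" using b(2) g(7)[OF nE] le by blast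
    thus ?thesis using gg[OF nE] n1 by auto
  qed
  have Kcimg: "compactin X (H c ` K)" if c: "c\<in>E" for c
    using image_compactin[OF Kc cont[OF c]] .
  have elemK: "elementary E e ginv X H \<omega> (H c ` K)" if c: "c\<in>E" for c
    unfolding elementary_def
  proof (intro conjI)
    show "balanced E e ginv X H (H c ` K)" using bal_img[OF c Kbal] .
    have "closedin X (H c ` K)" using compactin_imp_closedin[OF assms(2) Kcimg[OF c]] .
    thus "compactin X (X closure_of (H c ` K))" using Kcimg[OF c] by (simp add: closure_of_closedin)
    show "nbhd X \<omega> (H c ` K)" unfolding nbhd_def
      using Himg[OF c KT] openimg[OF c Topen] image_eqI[where f="H c", OF fixw[OF c, symmetric] \<omega>inT] image_mono[OF TK, of "H c"]
      by (intro conjI exI[of _ "H c ` T"]) auto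
  qed
  have elemT: "elementary E e ginv X H \<omega> (H c ` T)" if c: "c\<in>E" for c
    unfolding elementary_def
  proof (intro conjI)
    show "balanced E e ginv X H (H c ` T)" using bal_img[OF c Tbal] .
    have "closedin X (H c ` K)" using compactin_imp_closedin[OF assms(2) Kcimg[OF c]] .
    hence "X closure_of (H c ` T) \<subseteq> H c ` K" using image_mono[OF TK, of "H c"] by (intro closure_of_minimal)
    thus "compactin X (X closure_of (H c ` T))" using closed_compactin[OF Kcimg[OF c]] by simp
    show "nbhd X \<omega> (H c ` T)" unfolding nbhd_def
      using Himg[OF c TT] openimg[OF c Topen] image_eqI[where f="H c", OF fixw[OF c, symmetric] \<omega>inT]
      by (intro conjI exI[of _ "H c ` T"]) auto
  qed
  have cnt: "countable {n::nat. n \<ge> 1}" by (rule countable_subset[OF subset_UNIV countableI_type])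
  show ?thesis
  proof (intro conjI)
    show "\<exists>\<B>. countable \<B> \<and>
            (\<forall>T\<in>\<B>. elementary E e ginv X H \<omega> T \<and> compactin X T) \<and>
            (\<forall>V. nbhd X \<omega> V \<longrightarrow> (\<exists>T\<in>\<B>. T \<subseteq> V))"
    proof (intro exI[of _ "(\<lambda>n::nat. H (real n) ` K) ` {n. n \<ge> 1}"] conjI ballI allI impI)
      show "countable ((\<lambda>n::nat. H (real n) ` K) ` {n. n \<ge> 1})" using cnt by (rule countable_image)
      fix S assume "S \<in> (\<lambda>n::nat. H (real n) ` K) ` {n. n \<ge> 1}"
      then obtain n::nat where n: "n \<ge> 1" "S = H (real n) ` K" by blast
      show "elementary E e ginv X H \<omega> S" using elemK[OF nat[OF n(1)]] n(2) by simp
      show "compactin X S" using Kcimg[OF nat[OF n(1)]] n(2) by simp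
    next
      fix V assume "nbhd X \<omega> V"
      from choose[OF this] obtain n::nat where n: "n \<ge> 1" "H (real n) ` K \<subseteq> V" by blast
      show "\<exists>S\<in>(\<lambda>n::nat. H (real n) ` K) ` {n. n \<ge> 1}. S \<subseteq> V"
        using n by blast
    qed
    show "\<exists>\<B>. countable \<B> \<and>
            (\<forall>T\<in>\<B>. elementary E e ginv X H \<omega> T \<and> openin X T) \<and>
            (\<forall>V. nbhd X \<omega> V \<longrightarrow> (\<exists>T\<in>\<B>. T \<subseteq> V))"
    proof (intro exI[of _ "(\<lambda>n::nat. H (real n) ` T) ` {n. n \<ge> 1}"] conjI ballI allI impI)
      show "countable ((\<lambda>n::nat. H (real n) ` T) ` {n. n \<ge> 1})" using cnt by (rule countable_image)
      fix S assume "S \<in> (\<lambda>n::nat. H (real n) ` T) ` {n. n \<ge> 1}"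
      then obtain n::nat where n: "n \<ge> 1" "S = H (real n) ` T" by blast
      show "elementary E e ginv X H \<omega> S" using elemT[OF nat[OF n(1)]] n(2) by simp
      show "openin X S" using openimg[OF nat[OF n(1)] Topen] n(2) by simp
    next
      fix V assume "nbhd X \<omega> V"
      from choose[OF this] obtain n::nat where n: "n \<ge> 1" "H (real n) ` K \<subseteq> V" by blast
      have "H (real n) ` T \<subseteq> V" using image_mono[OF TK, of "H (real n)"] n(2) by (rule order_trans)
      thus "\<exists>S\<in>(\<lambda>n::nat. H (real n) ` T) ` {n. n \<ge> 1}. S \<subseteq> V"
        using n(1) by blast
    qed
  qed
qed
end
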